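(* Let $R$ be a Noetherian ring and $J=(f_1,\ldots,f_t)\subseteq I$ ideals such that $J\subseteq I$ is Aluffi torsion-free. For $1\le i\le t$ let $J_i=(f_1,\ldots,f_i)$. If $(J_{i}:_Rf_{i+1})=J_{i}$ for every $1\le i\le t-1$, then $J\subseteq I$ is strongly Aluffi torsion-free (with respect to the generators $f_1,\ldots,f_t$ in this order).
   Context: A pair of ideals $J\subseteq I$ in a ring $R$ is called Aluffi torsion-free if $J\cap I^n=JI^{n-1}$ for all $n\ge1$ (with $I^0=R$). For an ideal $J=(f_1,\ldots,f_t)\subseteq I$ with given ordered generators, the pair is called strongly Aluffi torsion-free if $J_i=(f_1,\ldots,f_i)\subseteq I$ is Aluffi torsion-free for each $i=1,\ldots,t$. *)

theory Defs
  imports "HOL-Algebra.Ideal_Product" "HOL-Algebra.Ring_Divisibility"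
begin

fun ideal_pow :: "('a, 'b) ring_scheme \<Rightarrow> 'a set \<Rightarrow> nat \<Rightarrow> 'a set" where
  "ideal_pow R I 0 = carrier R"
| "ideal_pow R I (Suc n) = ideal_prod R I (ideal_pow R I n)"

definition colon_ideal :: "('a, 'b) ring_scheme \<Rightarrow> 'a set \<Rightarrow> 'a \<Rightarrow> 'a set" where
  "colon_ideal R J f = {a \<in> carrier R. a \<otimes>\<^bsub>R\<^esub> f \<in> J}"

definition aluffi_torsion_free :: "('a, 'b) ring_scheme \<Rightarrow> 'a set \<Rightarrow> 'a set \<Rightarrow> bool" where
  "aluffi_torsion_free R J I \<longleftrightarrow> J \<subseteq> I \<and>
     (\<forall>n\<ge>1. J \<inter> ideal_pow R I n = ideal_prod R J (ideal_pow R I (n - 1)))"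

definition strongly_aluffi_torsion_free ::
  "('a, 'b) ring_scheme \<Rightarrow> (nat \<Rightarrow> 'a) \<Rightarrow> nat \<Rightarrow> 'a set \<Rightarrow> bool" where
  "strongly_aluffi_torsion_free R f t I \<longleftrightarrow>
     (\<forall>i\<in>{1..t}. aluffi_torsion_free R (genideal R (f ` {1..i})) I)"

end

theory Submission
  imports Defs
begin

context cring
begin

lemma ideal_pow_ideal: "ideal I R \<Longrightarrow> ideal (ideal_pow R I n) R"
  by (induction n) (auto simp: oneideal ideal_prod_is_ideal)

lemma ideal_prod_mono_l:
  assumes "K \<subseteq> I" "z \<in> K \<cdot> M" shows "z \<in> I \<cdot> M"
  using assms(2)
proof (induction rule: ideal_prod.induct)
  case (prod i j) then show ?case using assms(1) by (auto intro: ideal_prod.prod)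
next
  case (sum s1 s2) then show ?case by (auto intro: ideal_prod.sum)
qed

lemma pidl_prod_elem:
  assumes "ideal M R" "f \<in> carrier R" "z \<in> (PIdl f) \<cdot> M"
  shows "\<exists>a\<in>M. z = f \<otimes> a"
  using assms(3)
proof (induction rule: ideal_prod.induct)
  case (prod i j)
  interpret Mid: ideal M R by (rule assms(1))
  from prod obtain r where r: "r \<in> carrier R" "i = r \<otimes> f" unfolding cgenideal_def by blast
  have jc: "j \<in> carrier R" using prod Mid.Icarr by blast
  have rj: "r \<otimes> j \<in> M" using prod r Mid.I_l_closed by blast
  have "i \<otimes> j = (f \<otimes> r) \<otimes> j" using r assms(2) m_comm by simp
  also have "\<dots> = f \<otimes> (r \<otimes> j)" using r jc assms(2) m_assoc by simp
  finally show ?case using rj by blast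
next
  case (sum s1 s2)
  interpret Mid: ideal M R by (rule assms(1))
  from sum obtain a1 a2 where a: "a1 \<in> M" "a2 \<in> M" "s1 = f \<otimes> a1" "s2 = f \<otimes> a2" by blast
  have "a1 \<oplus> a2 \<in> M" using a Mid.a_closed by blast
  moreover have "f \<otimes> a1 \<oplus> f \<otimes> a2 = f \<otimes> (a1 \<oplus> a2)" using a assms(2) Mid.Icarr r_distr by simp
  ultimately show ?case using a by auto
qed

lemma genideal_insert:
  assumes "S \<subseteq> carrier R" "a \<in> carrier R"
  shows "Idl (insert a S) = Idl S <+> PIdl a"
proof
  have id: "ideal (Idl S <+> PIdl a) R"
    by (simp add: add_ideals assms cgenideal_ideal genideal_ideal)
  have "S \<subseteq> Idl S <+> PIdl a"
  proof
    fix x assume "x \<in> S"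
    hence "x \<in> Idl S" using genideal_self assms by blast
    moreover have "\<zero> \<in> PIdl a" using cgenideal_ideal[OF assms(2)]
      by (simp add: additive_subgroup.zero_closed ideal.axioms(1))
    moreover have "x = x \<oplus> \<zero>" using \<open>x \<in> S\<close> assms by auto
    ultimately show "x \<in> Idl S <+> PIdl a" unfolding set_add_def' by blast
  qed
  moreover have "a \<in> Idl S <+> PIdl a"
  proof -
    have "\<zero> \<in> Idl S" using genideal_ideal[OF assms(1)]
      by (simp add: additive_subgroup.zero_closed ideal.axioms(1))
    moreover have "a \<in> PIdl a" using cgenideal_self assms by blast
    moreover have "a = \<zero> \<oplus> a" using assms by auto
    ultimately show ?thesis unfolding set_add_def' by blast
  qed
  ultimately show "Idl (insert a S) \<subseteq> Idl S <+> PIdl a"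
    using id genideal_minimal by blast
next
  have id: "ideal (Idl (insert a S)) R" using assms genideal_ideal by simp
  have s1: "Idl S \<subseteq> Idl (insert a S)"
    by (rule subset_Idl_subset) (use assms in auto)
  have s2: "PIdl a \<subseteq> Idl (insert a S)"
    using cgenideal_minimal[OF id] genideal_self assms by blast
  show "Idl S <+> PIdl a \<subseteq> Idl (insert a S)"
  proof
    fix x assume "x \<in> Idl S <+>\<^bsub>R\<^esub> PIdl a"
    then obtain u v where "u \<in> Idl S" "v \<in> PIdl a" "x = u \<oplus> v" unfolding set_add_def' by blast
    moreover interpret Gid: ideal "Idl (insert a S)" R by (rule id)
    have "u \<oplus> v \<in> Idl (insert a S)" using calculation s1 s2 Gid.a_closed by blast
    ultimately show "x \<in> Idl (insert a S)" by simp
  qed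
qed

lemma step:
  fixes K I :: "'a set"
  assumes K: "ideal K R" and I: "ideal I R" and f: "f \<in> I" and KI: "K \<subseteq> I"
    and col: "colon_ideal R K f = K"
    and at: "aluffi_torsion_free R (K <+>\<^bsub>R\<^esub> PIdl f) I"
  shows "aluffi_torsion_free R K I"
proof -
  have fc: "f \<in> carrier R" by (rule ideal.Icarr[OF I f])
  have P: "ideal (PIdl f) R" by (rule cgenideal_ideal[OF fc])
  have KP: "ideal (K <+>\<^bsub>R\<^esub> PIdl f) R" by (rule add_ideals[OF K P])
  have eq: "(K <+>\<^bsub>R\<^esub> PIdl f) \<inter> ideal_pow R I (Suc m) = (K <+>\<^bsub>R\<^esub> PIdl f) \<cdot> ideal_pow R I m" for m
  proof -
    have all: "\<forall>n\<ge>1. (K <+>\<^bsub>R\<^esub> PIdl f) \<inter> ideal_pow R I n = (K <+>\<^bsub>R\<^esub> PIdl f) \<cdot> ideal_pow R I (n - 1)"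
      using at unfolding aluffi_torsion_free_def by (rule conjunct2)
    have "1 \<le> Suc m" by simp
    from all[rule_format, OF this] show ?thesis by simp
  qed
  have main: "K \<inter> ideal_pow R I (Suc m) = K \<cdot> ideal_pow R I m" for m
  proof (induction m)
    case 0
    have "ideal_pow R I 1 = I" using ideal_prod_one[OF I] by simp
    then show ?case using KI ideal_prod_one[OF K] by auto
  next
    case (Suc m)
    let ?M = "ideal_pow R I m"
    let ?N = "ideal_pow R I (Suc m)"
    have M: "ideal ?M R" by (rule ideal_pow_ideal[OF I])
    have N: "ideal ?N R" by (rule ideal_pow_ideal[OF I])
    have KN: "ideal (K \<cdot> ?N) R" by (rule ideal_prod_is_ideal[OF K N])
    show ?case
    proof
      show "K \<inter> ideal_pow R I (Suc (Suc m)) \<subseteq> K \<cdot> ?N"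
      proof
        fix x assume x: "x \<in> K \<inter> ideal_pow R I (Suc (Suc m))"
        have xc: "x \<in> carrier R" using ideal.Icarr[OF K] x by simp
        have "\<zero> \<in> PIdl f" using P by (simp add: additive_subgroup.zero_closed ideal.axioms(1))
        moreover have "x = x \<oplus> \<zero>" using xc by simp
        ultimately have "x \<in> K <+>\<^bsub>R\<^esub> PIdl f" using x unfolding set_add_def' by blast
        hence "x \<in> (K <+>\<^bsub>R\<^esub> PIdl f) \<cdot> ?N" using eq[of "Suc m"] x by blast
        also have "(K <+>\<^bsub>R\<^esub> PIdl f) \<cdot> ?N = ?N \<cdot> (K <+>\<^bsub>R\<^esub> PIdl f)"
          by (rule ideal_prod_commute[OF KP N])
        also have "\<dots> = (?N \<cdot> K) <+> (?N \<cdot> (PIdl f))" by (rule ideal_prod_distr[OF N K P])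
        also have "\<dots> = (K \<cdot> ?N) <+> ((PIdl f) \<cdot> ?N)" using ideal_prod_commute[OF N K] ideal_prod_commute[OF N P] by simp
        finally obtain y z where y: "y \<in> K \<cdot> ?N" and z: "z \<in> (PIdl f) \<cdot> ?N" and xyz: "x = y \<oplus> z"
          unfolding set_add_def' by blast
        obtain a where a: "a \<in> ?N" and za: "z = f \<otimes> a" using pidl_prod_elem[OF N fc z] by blast
        have ac: "a \<in> carrier R" by (rule ideal.Icarr[OF N a])
        have yK: "y \<in> K" using y ideal_prod_inter[OF K N] by blast
        have yc: "y \<in> carrier R" by (rule ideal.Icarr[OF K yK])
        have zc: "z \<in> carrier R" using za ac fc by simp
        have "x \<oplus> \<ominus> y = (z \<oplus> y) \<oplus> \<ominus> y" using xyz yc zc a_comm by simp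
        also have "\<dots> = z \<oplus> (y \<oplus> \<ominus> y)" using yc zc a_assoc by simp
        also have "\<dots> = z" using yc zc r_neg by simp
        finally have "z = x \<oplus> \<ominus> y" by simp
        moreover interpret Kid: ideal K R by (rule K)
        have "x \<oplus> \<ominus> y \<in> K" using x yK Kid.a_closed Kid.a_inv_closed by blast
        ultimately have "z \<in> K" by simp
        hence "a \<otimes> f \<in> K" using za ac fc m_comm by simp
        hence "a \<in> K" using col ac unfolding colon_ideal_def by blast
        hence "a \<in> K \<cdot> ?M" using Suc a by blast
        hence "f \<otimes> a \<in> I \<cdot> (K \<cdot> ?M)" by (rule ideal_prod.prod[OF f])
        also have "I \<cdot> (K \<cdot> ?M) = (I \<cdot> K) \<cdot> ?M" using ideal_prod_assoc[OF I K M] by (rule sym)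
        also have "\<dots> = (K \<cdot> I) \<cdot> ?M" using ideal_prod_commute[OF I K] by simp
        also have "\<dots> = K \<cdot> ?N" using ideal_prod_assoc[OF K I M] by simp
        finally have "z \<in> K \<cdot> ?N" using za by simp
        interpret KNid: ideal "K \<cdot> ?N" R by (rule KN)
        show "x \<in> K \<cdot> ?N" using KNid.a_closed[OF y \<open>z \<in> K \<cdot> ?N\<close>] xyz by simp
      qed
    next
      show "K \<cdot> ?N \<subseteq> K \<inter> ideal_pow R I (Suc (Suc m))"
      proof
        fix x assume x: "x \<in> K \<cdot> ?N"
        have "x \<in> K" using x ideal_prod_inter[OF K N] by blast
        moreover have "x \<in> I \<cdot> ?N" using ideal_prod_mono_l[OF KI x] .
        ultimately show "x \<in> K \<inter> ideal_pow R I (Suc (Suc m))" by simp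
      qed
    qed
  qed
  show ?thesis unfolding aluffi_torsion_free_def
  proof (intro conjI allI impI)
    fix n :: nat assume "1 \<le> n"
    then obtain m where "n = Suc m" by (cases n) auto
    thus "K \<inter> ideal_pow R I n = K \<cdot> ideal_pow R I (n - 1)" using main by simp
  qed (rule KI)
qed

end

theorem proposition2p12:
  fixes R :: "('a, 'b) ring_scheme" and f :: "nat \<Rightarrow> 'a" and t :: nat and I :: "'a set"
  assumes "cring R" and "noetherian_ring R"
    and "ideal I R"
    and "f ` {1..t} \<subseteq> carrier R"
    and "genideal R (f ` {1..t}) \<subseteq> I"
    and "aluffi_torsion_free R (genideal R (f ` {1..t})) I"
    and "\<forall>i. 1 \<le> i \<and> i \<le> t - 1 \<longrightarrow>
           colon_ideal R (genideal R (f ` {1..i})) (f (i + 1)) = genideal R (f ` {1..i})"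
  shows "strongly_aluffi_torsion_free R f t I"
proof -
  interpret cring R by fact
  have sub: "f ` {1..i} \<subseteq> carrier R" if "i \<le> t" for i
    using assms(4) that by auto
  have inI: "f ` {1..i} \<subseteq> I" if "i \<le> t" for i
    using genideal_self[OF sub[of t]] assms(5) that by force
  have GI: "genideal R (f ` {1..i}) \<subseteq> I" if "i \<le> t" for i
    using genideal_minimal[OF assms(3) inI[OF that]] .
  have down: "k \<le> t - 1 \<longrightarrow> aluffi_torsion_free R (genideal R (f ` {1..t - k})) I" for k
  proof (induction k)
    case 0 then show ?case using assms(6) by simp
  next
    case (Suc k)
    show ?case
    proof
      assume k: "Suc k \<le> t - 1"
      define i where "i = t - Suc k"
      have i1: "1 \<le> i" "i \<le> t - 1" "Suc i = t - k" using k unfolding i_def by auto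
      have set: "f ` {1..Suc i} = insert (f (Suc i)) (f ` {1..i})"
      proof -
        have "{1..Suc i} = insert (Suc i) {1..i}" by auto
        thus ?thesis by (simp only: image_insert)
      qed
      have fc: "f (Suc i) \<in> carrier R" using assms(4) i1 by auto
      have fI: "f (Suc i) \<in> I" using inI[of "Suc i"] i1 by auto
      have eqG: "genideal R (f ` {1..Suc i}) = genideal R (f ` {1..i}) <+>\<^bsub>R\<^esub> PIdl\<^bsub>R\<^esub> f (Suc i)"
        using genideal_insert[OF sub[of i] fc] set i1 by simp
      have "aluffi_torsion_free R (genideal R (f ` {1..i})) I"
      proof (rule step)
        show "ideal (genideal R (f ` {1..i})) R" using genideal_ideal sub i1 by simp
        show "ideal I R" by fact
        show "f (Suc i) \<in> I" by fact
        show "genideal R (f ` {1..i}) \<subseteq> I" using GI i1 by simp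
        show "colon_ideal R (genideal R (f ` {1..i})) (f (Suc i)) = genideal R (f ` {1..i})"
          using assms(7) i1(1,2) by simp
        show "aluffi_torsion_free R (genideal R (f ` {1..i}) <+>\<^bsub>R\<^esub> PIdl\<^bsub>R\<^esub> f (Suc i)) I"
        proof -
          have "Suc k \<le> t - 1 \<Longrightarrow> k \<le> t - 1" by simp
          hence "aluffi_torsion_free R (genideal R (f ` {1..Suc i})) I"
            using Suc.IH k i1(3)[symmetric] by simp
          thus ?thesis using eqG by simp
        qed
      qed
      thus "aluffi_torsion_free R (genideal R (f ` {1..t - Suc k})) I" unfolding i_def .
    qed
  qed
  show ?thesis unfolding strongly_aluffi_torsion_free_def
  proof
    fix i assume i: "i \<in> {1..t}"
    hence "t - i \<le> t - 1" "t - (t - i) = i" by auto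
    thus "aluffi_torsion_free R (genideal R (f ` {1..i})) I" using down[of "t - i"] by simp
  qed
qed

end
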